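(* Let $n\ge 2$ be an integer. For $i=1,2$ let $X_{i1},\dots,X_{in}$ be a random sample from the density $\frac{1}{\sigma}e^{-(x-\mu_i)/\sigma}$, $x\ge\mu_i$, the two samples independent, $\underline{\theta}=(\mu_1,\mu_2,\sigma)\in\mathbb{R}^2\times(0,\infty)$. Let $X_i=\min_jX_{ij}$, $Z_1=\min\{X_1,X_2\}$, $\mu_S=\mu_1I(X_1\le X_2)+\mu_2I(X_2<X_1)$, $\mu=n(\max\{\mu_1,\mu_2\}-\min\{\mu_1,\mu_2\})/\sigma$, and $U_1=\frac{Z_1-\mu_S}{\sigma}$. Then for every $\underline{\theta}$, (i) $\mathbb{E}_{\underline{\theta}}(U_1)=\frac1n\left[1-\left(\frac{\mu+1}{2}\right)e^{-\mu}\right]$; (ii) $\mathbb{E}_{\underline{\theta}}(U_1^2)=\frac{1}{n^2}\left[2-\left(\frac{\mu^2+3\mu+3}{2}\right)e^{-\mu}\right]$.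
   Context: $I(A)$ is the indicator of $A$; $\mathbb{E}_{\underline{\theta}}$ is expectation under $\underline{\theta}$. *)

theory Defs
  imports "HOL-Probability.Probability"
begin

definition shifted_exp_density :: "real \<Rightarrow> real \<Rightarrow> real \<Rightarrow> real" where
  "shifted_exp_density mu s x = (if x \<ge> mu then exp (-(x - mu) / s) / s else 0)"

definition sample_min :: "(nat \<Rightarrow> nat \<Rightarrow> 'a \<Rightarrow> real) \<Rightarrow> nat \<Rightarrow> nat \<Rightarrow> 'a \<Rightarrow> real" where
  "sample_min X n i \<omega> = Min ((\<lambda>j. X i j \<omega>) ` {1..n})"

end

theory Submission
  imports Defs "HOL-Real_Asymp.Real_Asymp"
begin


lemma inner_gen:
  fixes x m :: real and k :: nat
  assumes x: "0 \<le> x"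
  defines "t \<equiv> max 0 (x - m)"
  shows "(\<integral>\<^sup>+y. ennreal (exponential_density 1 y * (if x \<le> y + m then x else y)^k) \<partial>lborel)
     = ennreal ((1 - (\<Sum>n\<le>k. t ^ n * exp (- t) / fact n)) * fact k) + ennreal (x^k * exp (-t))"
proof -
  have t0: "0 \<le> t" unfolding t_def by simp
  have eq: "\<And>y. ennreal (exponential_density 1 y * (if x \<le> y + m then x else y)^k) =
     ennreal (y^k * exp (-y)) * indicator {0..<t} y + ennreal (x^k * exp (-y)) * indicator {t..} y"
  proof -
    fix y :: real
    show "?thesis y"
    proof (cases "y < 0")
      case True then show ?thesis using t0 by (auto simp: exponential_density_def split: split_indicator)
    next
      case False
      show ?thesis
      proof (cases "y < t")
        case True
        then have "\<not> x \<le> y + m" unfolding t_def using False by (auto simp: max_def split: if_splits)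
        then show ?thesis using True False by (auto simp: exponential_density_def mult.commute split: split_indicator)
      next
        case F2: False
        then have "x \<le> y + m" unfolding t_def by (auto simp: max_def split: if_splits)
        then show ?thesis using F2 False by (auto simp: exponential_density_def mult.commute split: split_indicator)
      qed
    qed
  qed
  have "(\<integral>\<^sup>+y. ennreal (exponential_density 1 y * (if x \<le> y + m then x else y)^k) \<partial>lborel)
     = (\<integral>\<^sup>+y. ennreal (y^k * exp (-y)) * indicator {0..<t} y \<partial>lborel) +
       (\<integral>\<^sup>+y. ennreal (x^k * exp (-y)) * indicator {t..} y \<partial>lborel)"
    unfolding eq by (rule nn_integral_add) auto
  also have "(\<integral>\<^sup>+y. ennreal (y^k * exp (-y)) * indicator {0..<t} y \<partial>lborel)
      = (\<integral>\<^sup>+y. ennreal (y^k * exp (-y)) * indicator {0..t} y \<partial>lborel)"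
    by (rule nn_integral_cong_AE) (use AE_lborel_singleton[of t] in \<open>auto split: split_indicator\<close>)
  also have "\<dots> = ennreal ((1 - (\<Sum>n\<le>k. t ^ n * exp (- t) / fact n)) * fact k)"
    using nn_intergal_power_times_exp_Icc[OF t0, of k] by simp
  also have "(\<integral>\<^sup>+y. ennreal (x^k * exp (-y)) * indicator {t..} y \<partial>lborel) = ennreal (0 - (- (x^k * exp (-t))))"
  proof (rule nn_integral_FTC_atLeast[where F="\<lambda>y. - (x^k * exp (-y))"])
    have "((\<lambda>y::real. exp (-y)) \<longlongrightarrow> 0) at_top"
      by (rule filterlim_compose[OF exp_at_bot filterlim_uminus_at_bot_at_top])
    then have "((\<lambda>y::real. x^k * exp (-y)) \<longlongrightarrow> 0) at_top"
      by (rule tendsto_mult_right_zero)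
    then show "((\<lambda>y::real. - (x^k * exp (-y))) \<longlongrightarrow> 0) at_top"
      using tendsto_minus by fastforce
  qed (auto intro!: derivative_eq_intros simp: x)
  finally show ?thesis by simp
qed


lemma G1_nonneg: "0 \<le> (t::real) \<Longrightarrow> (1 + t) * exp (- t) \<le> 1"
  by (metis exp_ge_add_one_self exp_gt_zero exp_minus_inverse mult_right_mono order.strict_iff_not mult.commute order_le_less)

lemma G2_nonneg: "0 \<le> (t::real) \<Longrightarrow> (1 + t + t^2/2) * exp (- t) \<le> 1"
proof -
  assume "0 \<le> t"
  then have "1 + t + t^2/2 \<le> exp t" by (rule exp_lower_Taylor_quadratic)
  then have "(1 + t + t^2/2) * exp (- t) \<le> exp t * exp (-t)" by (intro mult_right_mono) auto
  then show ?thesis by (simp add: exp_minus_inverse)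
qed

lemma inner1:
  fixes x m :: real
  assumes x: "0 \<le> x"
  defines "t \<equiv> max 0 (x - m)"
  shows "(\<integral>\<^sup>+y. ennreal (exponential_density 1 y * (if x \<le> y + m then x else y)) \<partial>lborel)
     = ennreal (1 - (1 + t) * exp (-t) + x * exp (-t))"
proof -
  have t0: "0 \<le> t" unfolding t_def by simp
  have "(\<integral>\<^sup>+y. ennreal (exponential_density 1 y * (if x \<le> y + m then x else y)) \<partial>lborel)
     = ennreal ((1 - (\<Sum>n\<le>1. t ^ n * exp (- t) / fact n)) * fact 1) + ennreal (x^1 * exp (-t))"
    using inner_gen[OF x, of m 1] unfolding t_def by simp
  also have "\<dots> = ennreal (1 - (1 + t) * exp (-t)) + ennreal (x * exp (-t))"
    by (simp add: algebra_simps)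
  also have "\<dots> = ennreal (1 - (1 + t) * exp (-t) + x * exp (-t))"
    using G1_nonneg[OF t0] x by (intro ennreal_plus[symmetric]) auto
  finally show ?thesis .
qed

lemma inner2:
  fixes x m :: real
  assumes x: "0 \<le> x"
  defines "t \<equiv> max 0 (x - m)"
  shows "(\<integral>\<^sup>+y. ennreal (exponential_density 1 y * (if x \<le> y + m then x else y)^2) \<partial>lborel)
     = ennreal (2 - 2 * (1 + t + t^2/2) * exp (-t) + x^2 * exp (-t))"
proof -
  have t0: "0 \<le> t" unfolding t_def by simp
  have "(\<integral>\<^sup>+y. ennreal (exponential_density 1 y * (if x \<le> y + m then x else y)^2) \<partial>lborel)
     = ennreal ((1 - (\<Sum>n\<le>2. t ^ n * exp (- t) / fact n)) * fact 2) + ennreal (x^2 * exp (-t))"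
    using inner_gen[OF x, of m 2] unfolding t_def by simp
  also have "\<dots> = ennreal (2 - 2 * (1 + t + t^2/2) * exp (-t)) + ennreal (x^2 * exp (-t))"
    by (simp add: algebra_simps numeral_eq_Suc fact_numeral)
  also have "\<dots> = ennreal (2 - 2 * (1 + t + t^2/2) * exp (-t) + x^2 * exp (-t))"
  proof (intro ennreal_plus[symmetric])
    have "2 * ((1 + t + t^2/2) * exp (- t)) \<le> 2" using G2_nonneg[OF t0] by linarith
    then show "0 \<le> 2 - 2 * (1 + t + t^2/2) * exp (-t)" by (simp add: algebra_simps)
  qed (use x in auto)
  finally show ?thesis .
qed


lemma exp_prod_shift: "exp (- x) * exp (- (x - m)) = exp (m - 2 * x)" for x m :: real
proof -
  have "m - 2 * x = - x + - (x - m)" by simp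
  then show ?thesis by (simp only: exp_add)
qed

lemma outer1:
  fixes m :: real
  shows "(\<integral>\<^sup>+x. ennreal (exponential_density 1 x * (1 - (1 + max 0 (x - m)) * exp (- max 0 (x - m)) + x * exp (- max 0 (x - m)))) \<partial>lborel)
    = ennreal (1 - (\<bar>m\<bar> + 1) / 2 * exp (- \<bar>m\<bar>))"
proof -
  define f where "f x = exp (-x) * (1 - (1 + (x - m)) * exp (- (x - m)) + x * exp (- (x - m)))" for x
  define F where "F x = - exp (-x) - (m-1)/2 * exp (m - 2*x)" for x
  have f_alt: "f x = exp(-x) + (m-1)*exp(m-2*x)" for x
  proof -
    have "f x = exp(-x) + (m-1) * (exp (- x) * exp (- (x - m)))" unfolding f_def by (simp add: algebra_simps)
    then show ?thesis by (simp only: exp_prod_shift)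
  qed
  have deriv: "(F has_real_derivative f x) (at x)" for x
    unfolding F_def f_alt
    by (auto intro!: derivative_eq_intros simp: field_simps) (simp add: algebra_simps power2_eq_square)?
  have lim: "(F \<longlongrightarrow> 0) at_top" unfolding F_def by real_asymp
  have fnn: "0 \<le> f x" if "0 \<le> x" "m \<le> x" for x
  proof -
    have "(1 + (x - m)) * exp (- (x - m)) \<le> 1" using G1_nonneg[of "x - m"] that by simp
    then show ?thesis unfolding f_def using that by (intro mult_nonneg_nonneg) auto
  qed
  have FTC: "(\<integral>\<^sup>+x. ennreal (f x) * indicator {a..} x \<partial>lborel) = ennreal (0 - F a)" if "0 \<le> a" "m \<le> a" for a
    by (rule nn_integral_FTC_atLeast[OF _ deriv _ lim]) (use fnn that in \<open>auto simp: f_def\<close>)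
  show ?thesis
  proof (cases "0 \<le> m")
    case True
    have eq: "ennreal (exponential_density 1 x * (1 - (1 + max 0 (x - m)) * exp (- max 0 (x - m)) + x * exp (- max 0 (x - m))))
      = ennreal (x^1 * exp (-x)) * indicator {0..<m} x + ennreal (f x) * indicator {m..} x" for x
      using True by (auto simp: exponential_density_def f_def max_def split: split_indicator)
    have "(\<integral>\<^sup>+x. ennreal (exponential_density 1 x * (1 - (1 + max 0 (x - m)) * exp (- max 0 (x - m)) + x * exp (- max 0 (x - m)))) \<partial>lborel)
      = (\<integral>\<^sup>+x. ennreal (x^1 * exp (-x)) * indicator {0..<m} x \<partial>lborel) + (\<integral>\<^sup>+x. ennreal (f x) * indicator {m..} x \<partial>lborel)"
      unfolding eq by (rule nn_integral_add) (auto simp: f_def)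
    also have "(\<integral>\<^sup>+x. ennreal (x^1 * exp (-x)) * indicator {0..<m} x \<partial>lborel)
      = (\<integral>\<^sup>+x. ennreal (x^1 * exp (-x)) * indicator {0..m} x \<partial>lborel)"
      by (rule nn_integral_cong_AE) (use AE_lborel_singleton[of m] in \<open>auto split: split_indicator\<close>)
    also have "\<dots> = ennreal ((1 - (\<Sum>n\<le>1. m ^ n * exp (- m) / fact n)) * fact 1)"
      using nn_intergal_power_times_exp_Icc[OF True, of 1] by simp
    also have "\<dots> = ennreal (1 - (1 + m) * exp (- m))" by (simp add: algebra_simps)
    also have "(\<integral>\<^sup>+x. ennreal (f x) * indicator {m..} x \<partial>lborel) = ennreal (0 - F m)"
      using FTC[of m] True by simp
    also have "ennreal (1 - (1 + m) * exp (- m)) + ennreal (0 - F m) = ennreal (1 - (1 + m) * exp (- m) + (0 - F m))"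
    proof (rule ennreal_plus[symmetric])
      show "0 \<le> 1 - (1 + m) * exp (- m)" using G1_nonneg[OF True] by simp
      have "0 - F m = (m+1)/2*exp(-m)" unfolding F_def by (simp add: field_simps)
      moreover have "0 \<le> (m+1)/2*exp(-m)" using True by simp
      ultimately show "0 \<le> 0 - F m" by linarith
    qed
    also have "1 - (1 + m) * exp (- m) + (0 - F m) = 1 - (\<bar>m\<bar> + 1) / 2 * exp (- \<bar>m\<bar>)"
      using True unfolding F_def by (simp add: field_simps)
    finally show ?thesis .
  next
    case False
    have eq: "ennreal (exponential_density 1 x * (1 - (1 + max 0 (x - m)) * exp (- max 0 (x - m)) + x * exp (- max 0 (x - m))))
      = ennreal (f x) * indicator {0..} x" for x
      using False by (auto simp: exponential_density_def f_def max_def split: split_indicator)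
    have "(\<integral>\<^sup>+x. ennreal (exponential_density 1 x * (1 - (1 + max 0 (x - m)) * exp (- max 0 (x - m)) + x * exp (- max 0 (x - m)))) \<partial>lborel)
      = ennreal (0 - F 0)" unfolding eq using FTC[of 0] False by simp
    also have "0 - F 0 = 1 - (\<bar>m\<bar> + 1) / 2 * exp (- \<bar>m\<bar>)"
      using False unfolding F_def by (simp add: field_simps)
    finally show ?thesis .
  qed
qed


lemma outer2:
  fixes m :: real
  shows "(\<integral>\<^sup>+x. ennreal (exponential_density 1 x * (2 - 2 * (1 + max 0 (x - m) + (max 0 (x - m))^2/2) * exp (- max 0 (x - m)) + x^2 * exp (- max 0 (x - m)))) \<partial>lborel)
    = ennreal (2 - (\<bar>m\<bar>^2 + 3 * \<bar>m\<bar> + 3) / 2 * exp (- \<bar>m\<bar>))"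
proof -
  define f where "f x = exp (-x) * (2 - 2 * (1 + (x - m) + (x - m)^2/2) * exp (- (x - m)) + x^2 * exp (- (x - m)))" for x
  define F where "F x = - 2 * exp (-x) - exp (m - 2*x) * (((2*m-2)*x + (2*m-m^2-2))/2 + (2*m-2)/4)" for x
  have f_alt: "f x = 2*exp(-x) + exp(m-2*x)*((2*m-2)*x + (2*m-m^2-2))" for x
  proof -
    have "f x = 2*exp(-x) + (exp (- x) * exp (- (x - m))) * ((2*m-2)*x + (2*m-m^2-2))"
      unfolding f_def by (simp add: field_simps power2_eq_square)
    then show ?thesis by (simp only: exp_prod_shift)
  qed
  have deriv: "(F has_real_derivative f x) (at x)" for x
    unfolding F_def f_alt
    by (auto intro!: derivative_eq_intros simp: field_simps) (simp add: algebra_simps power2_eq_square)?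
  have lim: "(F \<longlongrightarrow> 0) at_top" unfolding F_def by real_asymp
  have fnn: "0 \<le> f x" if "0 \<le> x" "m \<le> x" for x
  proof -
    have "(1 + (x - m) + (x - m)^2/2) * exp (- (x - m)) \<le> 1" using G2_nonneg[of "x - m"] that by simp
    then have "2 * ((1 + (x - m) + (x - m)^2/2) * exp (- (x - m))) \<le> 2" by linarith
    then have a: "0 \<le> 2 - 2 * (1 + (x - m) + (x - m)^2/2) * exp (- (x - m))" by (simp add: algebra_simps)
    have b: "0 \<le> x^2 * exp (- (x - m))" by simp
    show ?thesis unfolding f_def by (intro mult_nonneg_nonneg add_nonneg_nonneg a b) simp
  qed
  have FTC: "(\<integral>\<^sup>+x. ennreal (f x) * indicator {a..} x \<partial>lborel) = ennreal (0 - F a)" if "0 \<le> a" "m \<le> a" for a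
    by (rule nn_integral_FTC_atLeast[OF _ deriv _ lim]) (use fnn that in \<open>auto simp: f_def\<close>)
  show ?thesis
  proof (cases "0 \<le> m")
    case True
    have eq: "ennreal (exponential_density 1 x * (2 - 2 * (1 + max 0 (x - m) + (max 0 (x - m))^2/2) * exp (- max 0 (x - m)) + x^2 * exp (- max 0 (x - m))))
      = ennreal (x^2 * exp (-x)) * indicator {0..<m} x + ennreal (f x) * indicator {m..} x" for x
      using True by (auto simp: exponential_density_def f_def max_def split: split_indicator)
    have "(\<integral>\<^sup>+x. ennreal (exponential_density 1 x * (2 - 2 * (1 + max 0 (x - m) + (max 0 (x - m))^2/2) * exp (- max 0 (x - m)) + x^2 * exp (- max 0 (x - m)))) \<partial>lborel)
      = (\<integral>\<^sup>+x. ennreal (x^2 * exp (-x)) * indicator {0..<m} x \<partial>lborel) + (\<integral>\<^sup>+x. ennreal (f x) * indicator {m..} x \<partial>lborel)"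
      unfolding eq by (rule nn_integral_add) (auto simp: f_def)
    also have "(\<integral>\<^sup>+x. ennreal (x^2 * exp (-x)) * indicator {0..<m} x \<partial>lborel)
      = (\<integral>\<^sup>+x. ennreal (x^2 * exp (-x)) * indicator {0..m} x \<partial>lborel)"
      by (rule nn_integral_cong_AE) (use AE_lborel_singleton[of m] in \<open>auto split: split_indicator\<close>)
    also have "\<dots> = ennreal ((1 - (\<Sum>n\<le>2. m ^ n * exp (- m) / fact n)) * fact 2)"
      using nn_intergal_power_times_exp_Icc[OF True, of 2] by simp
    also have "\<dots> = ennreal (2 - 2 * (1 + m + m^2/2) * exp (- m))"
      by (simp add: algebra_simps numeral_eq_Suc fact_numeral)
    also have "(\<integral>\<^sup>+x. ennreal (f x) * indicator {m..} x \<partial>lborel) = ennreal (0 - F m)"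
      using FTC[of m] True by simp
    also have "ennreal (2 - 2 * (1 + m + m^2/2) * exp (- m)) + ennreal (0 - F m) = ennreal (2 - 2 * (1 + m + m^2/2) * exp (- m) + (0 - F m))"
    proof (rule ennreal_plus[symmetric])
      have "2 * ((1 + m + m^2/2) * exp (- m)) \<le> 2" using G2_nonneg[OF True] by linarith
      then show "0 \<le> 2 - 2 * (1 + m + m^2/2) * exp (- m)" by (simp add: algebra_simps)
      have "0 - F m = (m^2+m+1)/2*exp(-m)" unfolding F_def by (simp add: field_simps power2_eq_square)
      moreover have "0 \<le> (m^2+m+1)/2*exp(-m)" using True by simp
      ultimately show "0 \<le> 0 - F m" by linarith
    qed
    also have "2 - 2 * (1 + m + m^2/2) * exp (- m) + (0 - F m) = 2 - (\<bar>m\<bar>^2 + 3 * \<bar>m\<bar> + 3) / 2 * exp (- \<bar>m\<bar>)"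
      using True unfolding F_def by (simp add: field_simps power2_eq_square)
    finally show ?thesis .
  next
    case False
    have eq: "ennreal (exponential_density 1 x * (2 - 2 * (1 + max 0 (x - m) + (max 0 (x - m))^2/2) * exp (- max 0 (x - m)) + x^2 * exp (- max 0 (x - m))))
      = ennreal (f x) * indicator {0..} x" for x
      using False by (auto simp: exponential_density_def f_def max_def split: split_indicator)
    have "(\<integral>\<^sup>+x. ennreal (exponential_density 1 x * (2 - 2 * (1 + max 0 (x - m) + (max 0 (x - m))^2/2) * exp (- max 0 (x - m)) + x^2 * exp (- max 0 (x - m)))) \<partial>lborel)
      = ennreal (0 - F 0)" unfolding eq using FTC[of 0] False by simp
    also have "0 - F 0 = 2 - (\<bar>m\<bar>^2 + 3 * \<bar>m\<bar> + 3) / 2 * exp (- \<bar>m\<bar>)"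
      using False unfolding F_def by (simp add: field_simps power2_eq_square)
    finally show ?thesis .
  qed
qed


lemma double1:
  fixes m :: real
  shows "(\<integral>\<^sup>+p. (case p of (x, y) \<Rightarrow> ennreal (exponential_density 1 x) * ennreal (exponential_density 1 y)) *
            ennreal (case p of (x, y) \<Rightarrow> if x \<le> y + m then x else y) \<partial>(lborel \<Otimes>\<^sub>M lborel))
    = ennreal (1 - (\<bar>m\<bar> + 1) / 2 * exp (- \<bar>m\<bar>))"
proof -
  have "(\<integral>\<^sup>+p. (case p of (x, y) \<Rightarrow> ennreal (exponential_density 1 x) * ennreal (exponential_density 1 y)) *
            ennreal (case p of (x, y) \<Rightarrow> if x \<le> y + m then x else y) \<partial>(lborel \<Otimes>\<^sub>M lborel))
     = (\<integral>\<^sup>+x. \<integral>\<^sup>+y. ennreal (exponential_density 1 x) * ennreal (exponential_density 1 y) *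
            ennreal (if x \<le> y + m then x else y) \<partial>lborel \<partial>lborel)"
    by (subst lborel.nn_integral_fst[symmetric]) (simp_all, measurable)
  also have "\<dots> = (\<integral>\<^sup>+x. ennreal (exponential_density 1 x * (1 - (1 + max 0 (x - m)) * exp (- max 0 (x - m)) + x * exp (- max 0 (x - m)))) \<partial>lborel)"
  proof (rule nn_integral_cong)
    fix x :: real
    show "(\<integral>\<^sup>+y. ennreal (exponential_density 1 x) * ennreal (exponential_density 1 y) *
            ennreal (if x \<le> y + m then x else y) \<partial>lborel) = ennreal (exponential_density 1 x * (1 - (1 + max 0 (x - m)) * exp (- max 0 (x - m)) + x * exp (- max 0 (x - m))))"
    proof (cases "0 \<le> x")
      case True
      have "(\<integral>\<^sup>+y. ennreal (exponential_density 1 x) * ennreal (exponential_density 1 y) *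
            ennreal (if x \<le> y + m then x else y) \<partial>lborel)
         = (\<integral>\<^sup>+y. ennreal (exponential_density 1 x) * ennreal (exponential_density 1 y * (if x \<le> y + m then x else y)) \<partial>lborel)"
        by (rule nn_integral_cong) (simp add: ennreal_mult' exponential_density_nonneg mult.assoc)
      also have "\<dots> = ennreal (exponential_density 1 x) * (\<integral>\<^sup>+y. ennreal (exponential_density 1 y * (if x \<le> y + m then x else y)) \<partial>lborel)"
        by (rule nn_integral_cmult) simp
      also have "\<dots> = ennreal (exponential_density 1 x) * ennreal (1 - (1 + max 0 (x - m)) * exp (- max 0 (x - m)) + x * exp (- max 0 (x - m)))"
        using inner1[OF True, of m] by simp
      finally show ?thesis by (simp add: ennreal_mult' exponential_density_nonneg)
    next
      case False
      then show ?thesis by (simp add: exponential_density_def)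
    qed
  qed
  also have "\<dots> = ennreal (1 - (\<bar>m\<bar> + 1) / 2 * exp (- \<bar>m\<bar>))" by (rule outer1)
  finally show ?thesis .
qed

lemma double2:
  fixes m :: real
  shows "(\<integral>\<^sup>+p. (case p of (x, y) \<Rightarrow> ennreal (exponential_density 1 x) * ennreal (exponential_density 1 y)) *
            ennreal (case p of (x, y) \<Rightarrow> (if x \<le> y + m then x else y)^2) \<partial>(lborel \<Otimes>\<^sub>M lborel))
    = ennreal (2 - (\<bar>m\<bar>^2 + 3 * \<bar>m\<bar> + 3) / 2 * exp (- \<bar>m\<bar>))"
proof -
  have "(\<integral>\<^sup>+p. (case p of (x, y) \<Rightarrow> ennreal (exponential_density 1 x) * ennreal (exponential_density 1 y)) *
            ennreal (case p of (x, y) \<Rightarrow> (if x \<le> y + m then x else y)^2) \<partial>(lborel \<Otimes>\<^sub>M lborel))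
     = (\<integral>\<^sup>+x. \<integral>\<^sup>+y. ennreal (exponential_density 1 x) * ennreal (exponential_density 1 y) *
            ennreal ((if x \<le> y + m then x else y)^2) \<partial>lborel \<partial>lborel)"
    by (subst lborel.nn_integral_fst[symmetric]) (simp_all, measurable)
  also have "\<dots> = (\<integral>\<^sup>+x. ennreal (exponential_density 1 x * (2 - 2 * (1 + max 0 (x - m) + (max 0 (x - m))^2/2) * exp (- max 0 (x - m)) + x^2 * exp (- max 0 (x - m)))) \<partial>lborel)"
  proof (rule nn_integral_cong)
    fix x :: real
    show "(\<integral>\<^sup>+y. ennreal (exponential_density 1 x) * ennreal (exponential_density 1 y) *
            ennreal ((if x \<le> y + m then x else y)^2) \<partial>lborel) = ennreal (exponential_density 1 x * (2 - 2 * (1 + max 0 (x - m) + (max 0 (x - m))^2/2) * exp (- max 0 (x - m)) + x^2 * exp (- max 0 (x - m))))"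
    proof (cases "0 \<le> x")
      case True
      have "(\<integral>\<^sup>+y. ennreal (exponential_density 1 x) * ennreal (exponential_density 1 y) *
            ennreal ((if x \<le> y + m then x else y)^2) \<partial>lborel)
         = (\<integral>\<^sup>+y. ennreal (exponential_density 1 x) * ennreal (exponential_density 1 y * (if x \<le> y + m then x else y)^2) \<partial>lborel)"
        by (rule nn_integral_cong) (simp add: ennreal_mult' exponential_density_nonneg mult.assoc)
      also have "\<dots> = ennreal (exponential_density 1 x) * (\<integral>\<^sup>+y. ennreal (exponential_density 1 y * (if x \<le> y + m then x else y)^2) \<partial>lborel)"
        by (rule nn_integral_cmult) simp
      also have "\<dots> = ennreal (exponential_density 1 x) * ennreal (2 - 2 * (1 + max 0 (x - m) + (max 0 (x - m))^2/2) * exp (- max 0 (x - m)) + x^2 * exp (- max 0 (x - m)))"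
        using inner2[OF True, of m] by simp
      finally show ?thesis by (simp add: ennreal_mult' exponential_density_nonneg)
    next
      case False
      then show ?thesis by (simp add: exponential_density_def)
    qed
  qed
  also have "\<dots> = ennreal (2 - (\<bar>m\<bar>^2 + 3 * \<bar>m\<bar> + 3) / 2 * exp (- \<bar>m\<bar>))" by (rule outer2)
  finally show ?thesis .
qed



lemma (in prob_space) shifted_exp_std:
  assumes D: "distributed M lborel Z (\<lambda>x. ennreal (shifted_exp_density mu s x))" and s: "0 < s"
  shows "distributed M lborel (\<lambda>\<omega>. (Z \<omega> - mu) / s) (\<lambda>x. ennreal (exponential_density 1 x))"
proof (subst exponential_distributed_iff, safe)
  have Zm[measurable]: "Z \<in> borel_measurable M" using distributed_measurable[OF D] by simp
  show "(\<lambda>\<omega>. (Z \<omega> - mu) / s) \<in> borel_measurable M" by measurable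
  show "(0::real) < 1" by simp
  fix a :: real assume a: "0 \<le> a"
  have set_eq: "{\<omega> \<in> space M. (Z \<omega> - mu) / s \<le> a} = Z -` {.. mu + s * a} \<inter> space M"
    using s by (auto simp: field_simps)
  have "emeasure M {\<omega> \<in> space M. (Z \<omega> - mu) / s \<le> a} = (\<integral>\<^sup>+x\<in>{.. mu + s * a}. ennreal (shifted_exp_density mu s x) \<partial>lborel)"
    unfolding set_eq by (rule distributed_emeasure[OF D]) simp
  also have "\<dots> = (\<integral>\<^sup>+x. ennreal (exp (-(x - mu)/s) / s) * indicator {mu .. mu + s * a} x \<partial>lborel)"
    by (rule nn_integral_cong) (auto simp: shifted_exp_density_def split: split_indicator)
  also have "\<dots> = ennreal ((- exp (-((mu + s * a) - mu)/s)) - (- exp (-(mu - mu)/s)))"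
    by (rule nn_integral_FTC_Icc[where F="\<lambda>x. - exp (-(x - mu)/s)"])
       (use s a in \<open>auto intro!: derivative_eq_intros simp: field_simps\<close>)
  also have "\<dots> = ennreal (1 - exp (- a * 1))" using s by simp
  finally have "emeasure M {\<omega> \<in> space M. (Z \<omega> - mu) / s \<le> a} = ennreal (1 - exp (- a * 1))" .
  then show "prob {\<omega> \<in> space M. (Z \<omega> - mu) / s \<le> a} = 1 - exp (- a * 1)"
    using a by (simp add: emeasure_eq_measure)
qed


theorem lemma5p1:
  fixes M :: "'a measure" and X :: "nat \<Rightarrow> nat \<Rightarrow> 'a \<Rightarrow> real"
    and n :: nat and \<mu>1 \<mu>2 \<sigma> :: real
  assumes "prob_space M"
    and "n \<ge> 2"
    and "\<sigma> > 0"
    and "prob_space.indep_vars M (\<lambda>_. borel) (\<lambda>(i, j). X i j) ({1, 2} \<times> {1..n})"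
    and "\<forall>j\<in>{1..n}. distributed M lborel (X 1 j) (\<lambda>x. ennreal (shifted_exp_density \<mu>1 \<sigma> x))"
    and "\<forall>j\<in>{1..n}. distributed M lborel (X 2 j) (\<lambda>x. ennreal (shifted_exp_density \<mu>2 \<sigma> x))"
  defines "U1 \<equiv> (\<lambda>\<omega>. (min (sample_min X n 1 \<omega>) (sample_min X n 2 \<omega>)
                 - (if sample_min X n 1 \<omega> \<le> sample_min X n 2 \<omega> then \<mu>1 else \<mu>2)) / \<sigma>)"
    and "\<mu> \<equiv> real n * (max \<mu>1 \<mu>2 - min \<mu>1 \<mu>2) / \<sigma>"
  shows "(\<integral>\<omega>. U1 \<omega> \<partial>M) = (1 / real n) * (1 - ((\<mu> + 1) / 2) * exp (-\<mu>)) \<and>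
         (\<integral>\<omega>. (U1 \<omega>)\<^sup>2 \<partial>M) = (1 / (real n)\<^sup>2) * (2 - ((\<mu>\<^sup>2 + 3 * \<mu> + 3) / 2) * exp (-\<mu>))"
proof -
  interpret prob_space M by (rule assms(1))
  have s: "0 < \<sigma>" using assms(3) .
  have n0: "0 < real n" using assms(2) by simp
  define mu where "mu p = (if fst p = (1::nat) then \<mu>1 else \<mu>2)" for p :: "nat \<times> nat"
  define Y where "Y p \<omega> = ((\<lambda>(i, j). X i j) p \<omega> - mu p) / \<sigma>" for p \<omega>
  define I where "I = ({1, 2} \<times> {1..n} :: (nat \<times> nat) set)"
  define A1 where "A1 = ({1} \<times> {1..n} :: (nat \<times> nat) set)"
  define A2 where "A2 = ({2} \<times> {1..n} :: (nat \<times> nat) set)"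
  have indY: "indep_vars (\<lambda>_. borel) Y I"
    using indep_vars_compose2[OF assms(4), of "\<lambda>p x. (x - mu p) / \<sigma>" "\<lambda>_. borel"]
    unfolding Y_def I_def by simp
  have distY: "distributed M lborel (Y p) (\<lambda>x. ennreal (exponential_density 1 x))" if p: "p \<in> I" for p
  proof -
    obtain i j where pij: "p = (i, j)" and i: "i = 1 \<or> i = 2" and j: "j \<in> {1..n}"
      using p unfolding I_def by auto
    have D: "distributed M lborel (X i j) (\<lambda>x. ennreal (shifted_exp_density (mu p) \<sigma> x))"
      using i j assms(5,6) unfolding pij mu_def by auto
    have "Y p = (\<lambda>\<omega>. (X i j \<omega> - mu p) / \<sigma>)" unfolding Y_def pij by simp
    then show ?thesis using shifted_exp_std[OF D s] by simp
  qed
  have finA: "finite A1" "finite A2" unfolding A1_def A2_def by auto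
  have neA: "A1 \<noteq> {}" "A2 \<noteq> {}" unfolding A1_def A2_def using assms(2) by auto
  have subA: "A1 \<subseteq> I" "A2 \<subseteq> I" unfolding A1_def A2_def I_def by auto
  have cardA: "(\<Sum>p\<in>A1. (1::real)) = real n" "(\<Sum>p\<in>A2. (1::real)) = real n"
    unfolding A1_def A2_def by auto
  define V1 where "V1 \<omega> = real n * Min ((\<lambda>p. Y p \<omega>) ` A1)" for \<omega>
  define V2 where "V2 \<omega> = real n * Min ((\<lambda>p. Y p \<omega>) ` A2)" for \<omega>
  have dV: "distributed M lborel V1 (\<lambda>x. ennreal (exponential_density 1 x))"
           "distributed M lborel V2 (\<lambda>x. ennreal (exponential_density 1 x))"
  proof -
    have "distributed M lborel (\<lambda>\<omega>. Min ((\<lambda>p. Y p \<omega>) ` A1)) (\<lambda>x. ennreal (exponential_density (\<Sum>p\<in>A1. 1) x))"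
      by (rule exponential_distributed_Min[OF finA(1) neA(1)])
         (use distY subA indep_vars_subset[OF indY subA(1)] in auto)
    then have "distributed M lborel (\<lambda>\<omega>. real n * Min ((\<lambda>p. Y p \<omega>) ` A1)) (\<lambda>x. ennreal (exponential_density (real n / real n) x))"
      unfolding cardA by (intro erlang_distributed_mult_const) (use n0 in auto)
    then show "distributed M lborel V1 (\<lambda>x. ennreal (exponential_density 1 x))"
      using n0 unfolding V1_def by simp
  next
    have "distributed M lborel (\<lambda>\<omega>. Min ((\<lambda>p. Y p \<omega>) ` A2)) (\<lambda>x. ennreal (exponential_density (\<Sum>p\<in>A2. 1) x))"
      by (rule exponential_distributed_Min[OF finA(2) neA(2)])
         (use distY subA indep_vars_subset[OF indY subA(2)] in auto)
    then have "distributed M lborel (\<lambda>\<omega>. real n * Min ((\<lambda>p. Y p \<omega>) ` A2)) (\<lambda>x. ennreal (exponential_density (real n / real n) x))"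
      unfolding cardA by (intro erlang_distributed_mult_const) (use n0 in auto)
    then show "distributed M lborel V2 (\<lambda>x. ennreal (exponential_density 1 x))"
      using n0 unfolding V2_def by simp
  qed
  have indV: "indep_var lborel V1 lborel V2"
  proof -
    have disj: "A1 \<inter> A2 = {}" unfolding A1_def A2_def by auto
    have iv: "indep_var (PiM A1 (\<lambda>_. borel)) (\<lambda>\<omega>. restrict (\<lambda>p. Y p \<omega>) A1) (PiM A2 (\<lambda>_. borel)) (\<lambda>\<omega>. restrict (\<lambda>p. Y p \<omega>) A2)"
      by (rule indep_var_restrict[OF indY disj subA])
    have m1: "(\<lambda>f. real n * Min ((\<lambda>p. f p) ` A1)) \<in> PiM A1 (\<lambda>_. borel) \<rightarrow>\<^sub>M lborel"
      unfolding measurable_lborel1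
      by (intro borel_measurable_times borel_measurable_const borel_measurable_Min finA(1))
         (auto intro: measurable_component_singleton)
    have m2: "(\<lambda>f. real n * Min ((\<lambda>p. f p) ` A2)) \<in> PiM A2 (\<lambda>_. borel) \<rightarrow>\<^sub>M lborel"
      unfolding measurable_lborel1
      by (intro borel_measurable_times borel_measurable_const borel_measurable_Min finA(2))
         (auto intro: measurable_component_singleton)
    have e1: "(\<lambda>f. real n * Min ((\<lambda>p. f p) ` A1)) \<circ> (\<lambda>\<omega>. restrict (\<lambda>p. Y p \<omega>) A1) = V1"
      by (rule ext) (simp add: V1_def cong: image_cong)
    have e2: "(\<lambda>f. real n * Min ((\<lambda>p. f p) ` A2)) \<circ> (\<lambda>\<omega>. restrict (\<lambda>p. Y p \<omega>) A2) = V2"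
      by (rule ext) (simp add: V2_def cong: image_cong)
    show ?thesis using indep_var_compose[OF iv m1 m2] unfolding e1 e2 .
  qed
  have joint: "distributed M (lborel \<Otimes>\<^sub>M lborel) (\<lambda>\<omega>. (V1 \<omega>, V2 \<omega>))
      (\<lambda>(x, y). ennreal (exponential_density 1 x) * ennreal (exponential_density 1 y))"
    by (rule distributed_joint_indep[OF sigma_finite_lborel sigma_finite_lborel dV indV])

  define m where "m = real n * (\<mu>2 - \<mu>1) / \<sigma>"
  define H where "H p = (case p of (x, y) \<Rightarrow> if x \<le> y + m then x else y)" for p :: "real \<times> real"
  have V1_eq: "V1 \<omega> = real n * ((sample_min X n 1 \<omega> - \<mu>1) / \<sigma>)" for \<omega>
  proof -
    have A1i: "A1 = (\<lambda>j. (1, j)) ` {1..n}" unfolding A1_def by auto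
    have img: "(\<lambda>p. Y p \<omega>) ` A1 = (\<lambda>v. (v - \<mu>1) / \<sigma>) ` ((\<lambda>j. X 1 j \<omega>) ` {1..n})"
      unfolding A1i by (simp add: image_image Y_def mu_def)
    have mono: "mono (\<lambda>v. (v - \<mu>1) / \<sigma>)" using s by (auto simp: mono_def divide_right_mono)
    have "(\<lambda>v. (v - \<mu>1) / \<sigma>) (Min ((\<lambda>j. X 1 j \<omega>) ` {1..n})) = Min ((\<lambda>v. (v - \<mu>1) / \<sigma>) ` ((\<lambda>j. X 1 j \<omega>) ` {1..n}))"
      by (rule mono_Min_commute[OF mono]) (use assms(2) in auto)
    then show ?thesis by (simp add: V1_def sample_min_def img)
  qed
  have V2_eq: "V2 \<omega> = real n * ((sample_min X n 2 \<omega> - \<mu>2) / \<sigma>)" for \<omega>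
  proof -
    have A2i: "A2 = (\<lambda>j. (2, j)) ` {1..n}" unfolding A2_def by auto
    have img: "(\<lambda>p. Y p \<omega>) ` A2 = (\<lambda>v. (v - \<mu>2) / \<sigma>) ` ((\<lambda>j. X 2 j \<omega>) ` {1..n})"
      unfolding A2i by (simp add: image_image Y_def mu_def)
    have mono: "mono (\<lambda>v. (v - \<mu>2) / \<sigma>)" using s by (auto simp: mono_def divide_right_mono)
    have "(\<lambda>v. (v - \<mu>2) / \<sigma>) (Min ((\<lambda>j. X 2 j \<omega>) ` {1..n})) = Min ((\<lambda>v. (v - \<mu>2) / \<sigma>) ` ((\<lambda>j. X 2 j \<omega>) ` {1..n}))"
      by (rule mono_Min_commute[OF mono]) (use assms(2) in auto)
    then show ?thesis by (simp add: V2_def sample_min_def img)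
  qed
  have U1_eq: "U1 \<omega> = H (V1 \<omega>, V2 \<omega>) / real n" for \<omega>
  proof -
    define a where "a = sample_min X n 1 \<omega>"
    define b where "b = sample_min X n 2 \<omega>"
    have iff: "V1 \<omega> \<le> V2 \<omega> + m \<longleftrightarrow> a \<le> b"
    proof -
      have "V2 \<omega> + m = real n * ((b - \<mu>1) / \<sigma>)" using s by (simp add: V2_eq m_def b_def field_simps)
      then show ?thesis using s n0 by (simp add: V1_eq a_def mult_le_cancel_left_pos divide_le_cancel)
    qed
    have U: "U1 \<omega> = (min a b - (if a \<le> b then \<mu>1 else \<mu>2)) / \<sigma>"
      unfolding U1_def a_def b_def by (rule refl)
    have HV: "H (V1 \<omega>, V2 \<omega>) = (if a \<le> b then V1 \<omega> else V2 \<omega>)" by (simp add: H_def iff)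
    have v1: "V1 \<omega> = real n * ((a - \<mu>1) / \<sigma>)" unfolding a_def by (rule V1_eq)
    have v2: "V2 \<omega> = real n * ((b - \<mu>2) / \<sigma>)" unfolding b_def by (rule V2_eq)
    show ?thesis
    proof (cases "a \<le> b")
      case True then show ?thesis unfolding U HV using n0 by (simp add: v1 min_def)
    next
      case False then show ?thesis unfolding U HV using n0 by (simp add: v2 min_def)
    qed
  qed
  have mV[measurable]: "V1 \<in> borel_measurable M" "V2 \<in> borel_measurable M"
    using distributed_measurable[OF dV(1)] distributed_measurable[OF dV(2)] by simp_all
  have meas: "(\<lambda>\<omega>. H (V1 \<omega>, V2 \<omega>)) \<in> borel_measurable M"
    unfolding H_def by simp
  have AEnn: "AE \<omega> in M. 0 \<le> H (V1 \<omega>, V2 \<omega>)"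
  proof -
    have "AE p in lborel \<Otimes>\<^sub>M lborel. 0 < (case p of (x, y) \<Rightarrow> ennreal (exponential_density 1 x) * ennreal (exponential_density 1 y)) \<longrightarrow> 0 \<le> H p"
    proof (rule AE_I2, rule impI)
      fix p :: "real \<times> real"
      obtain x y where p: "p = (x, y)" by (cases p)
      assume "0 < (case p of (x, y) \<Rightarrow> ennreal (exponential_density 1 x) * ennreal (exponential_density 1 y))"
      then have pos: "0 < ennreal (exponential_density 1 x) * ennreal (exponential_density 1 y)" by (simp add: p)
      have "x \<ge> 0"
      proof (rule ccontr)
        assume "\<not> x \<ge> 0" then have "exponential_density 1 x = 0" by (simp add: exponential_density_def)
        then show False using pos by simp
      qed
      moreover have "y \<ge> 0"
      proof (rule ccontr)
        assume "\<not> y \<ge> 0" then have "exponential_density 1 y = 0" by (simp add: exponential_density_def)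
        then show False using pos by simp
      qed
      ultimately show "0 \<le> H p" by (simp add: H_def p)
    qed
    moreover have "Measurable.pred (lborel \<Otimes>\<^sub>M lborel) (\<lambda>p. 0 \<le> H p)" unfolding H_def by measurable
    ultimately show ?thesis using distributed_AE2[OF joint, of "\<lambda>p. 0 \<le> H p"] by simp
  qed
  have nnH: "(\<integral>\<^sup>+\<omega>. ennreal (H (V1 \<omega>, V2 \<omega>)) \<partial>M) = ennreal (1 - (\<bar>m\<bar> + 1) / 2 * exp (- \<bar>m\<bar>))"
  proof -
    have "(\<lambda>p. ennreal (H p)) \<in> borel_measurable (lborel \<Otimes>\<^sub>M lborel)" unfolding H_def by measurable
    from distributed_nn_integral[OF joint this] show ?thesis using double1[of m] by (simp add: H_def)
  qed
  have nnH2: "(\<integral>\<^sup>+\<omega>. ennreal ((H (V1 \<omega>, V2 \<omega>))^2) \<partial>M) = ennreal (2 - (\<bar>m\<bar>^2 + 3 * \<bar>m\<bar> + 3) / 2 * exp (- \<bar>m\<bar>))"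
  proof -
    have "(\<lambda>p. ennreal ((H p)^2)) \<in> borel_measurable (lborel \<Otimes>\<^sub>M lborel)" unfolding H_def by measurable
    from distributed_nn_integral[OF joint this] show ?thesis using double2[of m]
      by (simp add: H_def case_prod_beta)
  qed
  define t where "t = \<bar>m\<bar>"
  have t0: "0 \<le> t" unfolding t_def by simp
  have R1: "0 \<le> 1 - (t + 1) / 2 * exp (- t)"
    using G1_nonneg[OF t0] by (simp add: algebra_simps)
  have R2: "0 \<le> 2 - (t^2 + 3 * t + 3) / 2 * exp (- t)"
  proof -
    have "(t^2 + 3 * t + 3) * exp (- t) \<le> (4 * (1 + t + t^2/2)) * exp (- t)"
      by (intro mult_right_mono) (use t0 in \<open>auto simp: power2_eq_square algebra_simps intro: add_nonneg_nonneg\<close>)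
    also have "\<dots> = 4 * ((1 + t + t^2/2) * exp (- t))" by (simp only: mult.assoc)
    also have "\<dots> \<le> 4" using G2_nonneg[OF t0] by linarith
    finally show ?thesis by simp
  qed
  have mu_eq: "\<mu> = t"
  proof -
    have "max \<mu>1 \<mu>2 - min \<mu>1 \<mu>2 = \<bar>\<mu>2 - \<mu>1\<bar>" by (simp add: max_def min_def abs_if)
    then show ?thesis using s unfolding assms(8) t_def m_def by (simp add: abs_mult abs_divide)
  qed
  have E1: "(\<integral>\<omega>. U1 \<omega> \<partial>M) = (1 - (t + 1) / 2 * exp (- t)) / real n"
  proof -
    have "(\<integral>\<omega>. U1 \<omega> \<partial>M) = (\<integral>\<omega>. H (V1 \<omega>, V2 \<omega>) / real n \<partial>M)" by (simp add: U1_eq)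
    also have "\<dots> = (\<integral>\<omega>. H (V1 \<omega>, V2 \<omega>) \<partial>M) / real n" by (rule integral_divide_zero)
    also have "(\<integral>\<omega>. H (V1 \<omega>, V2 \<omega>) \<partial>M) = enn2real (\<integral>\<^sup>+\<omega>. ennreal (H (V1 \<omega>, V2 \<omega>)) \<partial>M)"
      by (rule integral_eq_nn_integral[OF meas AEnn])
    also have "\<dots> = 1 - (t + 1) / 2 * exp (- t)" unfolding nnH using R1 by (simp add: t_def)
    finally show ?thesis .
  qed
  have E2: "(\<integral>\<omega>. (U1 \<omega>)\<^sup>2 \<partial>M) = (2 - (t^2 + 3 * t + 3) / 2 * exp (- t)) / (real n)\<^sup>2"
  proof -
    have "(\<integral>\<omega>. (U1 \<omega>)\<^sup>2 \<partial>M) = (\<integral>\<omega>. (H (V1 \<omega>, V2 \<omega>))\<^sup>2 / (real n)\<^sup>2 \<partial>M)" by (simp add: U1_eq power_divide)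
    also have "\<dots> = (\<integral>\<omega>. (H (V1 \<omega>, V2 \<omega>))\<^sup>2 \<partial>M) / (real n)\<^sup>2" by (rule integral_divide_zero)
    also have "(\<integral>\<omega>. (H (V1 \<omega>, V2 \<omega>))\<^sup>2 \<partial>M) = enn2real (\<integral>\<^sup>+\<omega>. ennreal ((H (V1 \<omega>, V2 \<omega>))\<^sup>2) \<partial>M)"
      by (rule integral_eq_nn_integral) (use meas in auto)
    also have "\<dots> = 2 - (t^2 + 3 * t + 3) / 2 * exp (- t)" unfolding nnH2 using R2 by (simp add: t_def)
    finally show ?thesis .
  qed
  show ?thesis unfolding E1 E2 mu_eq by simp
qed

end
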